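(* Let $((P,\omega),B)\in \mathrm{Gr}^{\rm po}_{2,1}(\Gamma_{\mathbb R})\times\Gamma_{\mathbb R}$ with $\omega,B\in\Gamma'_{\mathbb R}\oplus\mathbb R v$. Then there is $\sigma\in\Gamma_{\mathbb C}$ with $P=P_\sigma$, $\langle\mathrm{Im}(\sigma),v\rangle=0$ and $\langle\mathrm{Re}(\sigma),v\rangle\neq0$. Define $$\sigma^{\vee}:=\frac{1}{\langle \mathrm{Re}(\sigma),v\rangle}\Big(\mathrm{pr}(B+i\omega)-\tfrac12(B+i\omega)^2v+v^*\Big),$$ $$B^{\vee}+i\omega^{\vee}:=\frac{1}{\langle \mathrm{Re}(\sigma),v\rangle}\Big(\mathrm{pr}(\sigma)-\langle\sigma,B\rangle v\Big),$$ with $B^\vee,\omega^\vee\in\Gamma_{\mathbb R}$. Then: - $((P_{\sigma^\vee},\omega^\vee),B^\vee)\in \mathrm{Gr}^{\rm po}_{2,1}(\Gamma_{\mathbb R})\times\Gamma_{\mathbb R}$; - $\tilde\xi(\gamma((P,\omega),B))=\gamma((P_{\sigma^\vee},\omega^\vee),B^\vee)$. In particular, the $\tilde\xi$-mirror of a point of $\gamma(\mathrm{Gr}^{\rm po}_{2,1}(\Gamma_{\mathbb R})\times\Gamma_{\mathbb R})$ satisfying these hypotheses again lies in $\gamma(\mathrm{Gr}^{\rm po}_{2,1}(\Gamma_{\mathbb R})\times\Gamma_{\mathbb R})$.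
   Context: $\Gamma$ is a lattice of signature $(3,b-3)$ with a fixed orthogonal splitting $\Gamma=\Gamma'\oplus U'$, where $U'$ is a hyperbolic plane. $U$ is a further hyperbolic plane with standard basis $(w,w^* )$ ($w^2={w^*}^2=0$, $\langle w,w^*\rangle=1$). An isometry $U'\cong U$ is fixed, and $(v,v^* )$ is the basis of $U'$ corresponding to $(w,w^* )$. $\mathrm{pr}:\Gamma_{\mathbb R}\to\Gamma'_{\mathbb R}$ is the orthogonal projection, extended complex-linearly. The form is extended complex-bilinearly to $\Gamma_{\mathbb C}$. For $\sigma\in\Gamma_{\mathbb C}$ with $\sigma^2=0$ and $(\sigma+\bar\sigma)^2>0$, $P_\sigma$ is the plane spanned by $\mathrm{Re}\,\sigma,\mathrm{Im}\,\sigma$, oriented by this basis. $\mathrm{Gr}^{\rm po}_{2,1}(\Gamma_{\mathbb R})=\{(P,\omega): P$ an oriented positive definite plane in $\Gamma_{\mathbb R}$, $\omega\in P^\perp$, $\omega^2>0\}$. $\mathrm{Gr}^{\rm po}_{2,2}(\Gamma_{\mathbb R}\oplus U_{\mathbb R})$ is the set of pairs $(H_1,H_2)$ of orthogonal oriented positive definite planes in $\Gamma_{\mathbb R}\oplus U_{\mathbb R}$. The map $\gamma:\mathrm{Gr}^{\rm po}_{2,1}(\Gamma_{\mathbb R})\times\Gamma_{\mathbb R}\to \mathrm{Gr}^{\rm po}_{2,2}(\Gamma_{\mathbb R}\oplus U_{\mathbb R})$ sends $((P,\omega),B)$ to $(H_1,H_2)$ where: - $H_1=\{x-\langle x,B\rangle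 w: x\in P\}$, oriented via $P$; - $H_2$ has the ordered basis $\big(\tfrac12(\omega^2-B^2)w+w^*+B,\ \omega-\langle\omega,B\rangle w\big)$. $\xi\in \mathrm O(\Gamma\oplus U)$ is the identity on $\Gamma'$ and interchanges $U$ and $U'$: $v\leftrightarrow w$, $v^*\leftrightarrow w^*$. $\iota(H_1,H_2)=(H_2,H_1)$. The mirror map is $\tilde\xi=\iota\circ\xi$, acting on $\mathrm{Gr}^{\rm po}_{2,2}(\Gamma_{\mathbb R}\oplus U_{\mathbb R})$. *)

theory Defs
  imports "HOL-Analysis.Analysis"
begin

text \<open>Gamma'_R is a finite-dimensional real vector space 'a carrying a symmetric
bilinear form g.  Gamma_R = Gamma'_R (+) U'_R is modelled as 'a \<times> real \<times> real, where
(x,s,t) stands for x + s v + t v*.  Gamma_R (+) U_R is modelled as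
('a \<times> real \<times> real) \<times> real \<times> real, where (y,p,r) stands for y + p w + r w*.
Complex vectors (elements of the complexification) are pairs (Re, Im) of real vectors.\<close>

type_synonym 'a gam = "'a \<times> real \<times> real"
type_synonym 'a gamU = "'a gam \<times> real \<times> real"

definition gam_form :: "('a \<Rightarrow> 'a \<Rightarrow> real) \<Rightarrow> 'a gam \<Rightarrow> 'a gam \<Rightarrow> real" where
  "gam_form g u u' = g (fst u) (fst u') + fst (snd u) * snd (snd u') + snd (snd u) * fst (snd u')"

definition gamU_form :: "('a \<Rightarrow> 'a \<Rightarrow> real) \<Rightarrow> 'a gamU \<Rightarrow> 'a gamU \<Rightarrow> real" where
  "gamU_form g u u' = gam_form g (fst u) (fst u') + fst (snd u) * snd (snd u') + snd (snd u) * fst (snd u')"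

definition vv :: "'a::zero gam" where "vv = (0, 1, 0)"
definition vs :: "'a::zero gam" where "vs = (0, 0, 1)"
definition ww :: "'a::zero gamU" where "ww = (0, 1, 0)"
definition ws :: "'a::zero gamU" where "ws = (0, 0, 1)"

definition pr :: "'a::zero gam \<Rightarrow> 'a gam" where "pr u = (fst u, 0, 0)"

definition incl :: "'a::zero gam \<Rightarrow> 'a gamU" where "incl x = (x, 0, 0)"

definition pos_def_sub :: "('v \<Rightarrow> 'v \<Rightarrow> real) \<Rightarrow> 'v::real_vector set \<Rightarrow> bool" where
  "pos_def_sub q V \<longleftrightarrow> subspace V \<and> (\<forall>x\<in>V. x \<noteq> 0 \<longrightarrow> q x x > 0)"

definition neg_def_sub :: "('v \<Rightarrow> 'v \<Rightarrow> real) \<Rightarrow> 'v::real_vector set \<Rightarrow> bool" where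
  "neg_def_sub q V \<longleftrightarrow> subspace V \<and> (\<forall>x\<in>V. x \<noteq> 0 \<longrightarrow> q x x < 0)"

definition has_signature :: "('v::euclidean_space \<Rightarrow> 'v \<Rightarrow> real) \<Rightarrow> nat \<Rightarrow> nat \<Rightarrow> bool" where
  "has_signature q p m \<longleftrightarrow>
     (\<forall>x. (\<forall>y. q x y = 0) \<longrightarrow> x = 0) \<and>
     (\<exists>V. pos_def_sub q V \<and> dim V = p) \<and> (\<forall>V. pos_def_sub q V \<longrightarrow> dim V \<le> p) \<and>
     (\<exists>V. neg_def_sub q V \<and> dim V = m) \<and> (\<forall>V. neg_def_sub q V \<longrightarrow> dim V \<le> m)"

text \<open>An oriented plane is represented by its orientation class of ordered bases.\<close>
definition oplane :: "'v::real_vector \<Rightarrow> 'v \<Rightarrow> ('v \<times> 'v) set" where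
  "oplane e1 e2 = {(f1, f2). \<exists>a b c d. f1 = a *\<^sub>R e1 + b *\<^sub>R e2 \<and> f2 = c *\<^sub>R e1 + d *\<^sub>R e2
                                 \<and> a * d - b * c > 0}"

definition pos_oplane :: "('v \<Rightarrow> 'v \<Rightarrow> real) \<Rightarrow> ('v::real_vector \<times> 'v) set \<Rightarrow> bool" where
  "pos_oplane q P \<longleftrightarrow> (\<exists>e1 e2. (\<forall>a b. a *\<^sub>R e1 + b *\<^sub>R e2 = 0 \<longrightarrow> a = 0 \<and> b = 0)
       \<and> P = oplane e1 e2 \<and> (\<forall>x\<in>span {e1, e2}. x \<noteq> 0 \<longrightarrow> q x x > 0))"

definition perp_oplane :: "('v \<Rightarrow> 'v \<Rightarrow> real) \<Rightarrow> 'v \<Rightarrow> ('v \<times> 'v) set \<Rightarrow> bool" where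
  "perp_oplane q x P \<longleftrightarrow> (\<forall>f\<in>P. q x (fst f) = 0 \<and> q x (snd f) = 0)"

definition Gr21 :: "('v \<Rightarrow> 'v \<Rightarrow> real) \<Rightarrow> (('v::real_vector \<times> 'v) set \<times> 'v) set" where
  "Gr21 q = {(P, \<omega>). pos_oplane q P \<and> perp_oplane q \<omega> P \<and> q \<omega> \<omega> > 0}"

definition map_oplane :: "('v \<Rightarrow> 'w) \<Rightarrow> ('v \<times> 'v) set \<Rightarrow> ('w \<times> 'w) set" where
  "map_oplane f P = (\<lambda>e. (f (fst e), f (snd e))) ` P"

definition cform :: "('v \<Rightarrow> 'v \<Rightarrow> real) \<Rightarrow> 'v \<times> 'v \<Rightarrow> 'v \<times> 'v \<Rightarrow> complex" where
  "cform q x y = Complex (q (fst x) (fst y) - q (snd x) (snd y)) (q (fst x) (snd y) + q (snd x) (fst y))"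

definition cscale :: "complex \<Rightarrow> 'v::real_vector \<times> 'v \<Rightarrow> 'v \<times> 'v" where
  "cscale z x = (Re z *\<^sub>R fst x - Im z *\<^sub>R snd x, Re z *\<^sub>R snd x + Im z *\<^sub>R fst x)"

definition creal :: "'v::zero \<Rightarrow> 'v \<times> 'v" where "creal x = (x, 0)"

definition cpr :: "'a::zero gam \<times> 'a gam \<Rightarrow> 'a gam \<times> 'a gam" where
  "cpr x = (pr (fst x), pr (snd x))"

text \<open>sigma with sigma^2 = 0 and (sigma + conj sigma)^2 > 0\<close>
definition period_ok :: "('v \<Rightarrow> 'v \<Rightarrow> real) \<Rightarrow> 'v::real_vector \<times> 'v \<Rightarrow> bool" where
  "period_ok q \<sigma> \<longleftrightarrow> cform q \<sigma> \<sigma> = 0 \<and> q (2 *\<^sub>R fst \<sigma>) (2 *\<^sub>R fst \<sigma>) > 0"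

definition P_sigma :: "'v \<times> 'v \<Rightarrow> ('v::real_vector \<times> 'v) set" where
  "P_sigma \<sigma> = oplane (fst \<sigma>) (snd \<sigma>)"

definition gamma :: "('a::real_vector \<Rightarrow> 'a \<Rightarrow> real) \<Rightarrow> (('a gam \<times> 'a gam) set \<times> 'a gam) \<times> 'a gam
                     \<Rightarrow> ('a gamU \<times> 'a gamU) set \<times> ('a gamU \<times> 'a gamU) set" where
  "gamma g PwB = (let P = fst (fst PwB); \<omega> = snd (fst PwB); B = snd PwB; q = gam_form g in
     (map_oplane (\<lambda>x. incl x - q x B *\<^sub>R ww) P,
      oplane ((1/2 * (q \<omega> \<omega> - q B B)) *\<^sub>R ww + ws + incl B) (incl \<omega> - q \<omega> B *\<^sub>R ww)))"

text \<open>xi: identity on Gamma', v <-> w, v* <-> w*\<close>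
definition xi :: "'a gamU \<Rightarrow> 'a gamU" where
  "xi u = ((fst (fst u), fst (snd u), snd (snd u)), fst (snd (fst u)), snd (snd (fst u)))"

definition mirror :: "('a gamU \<times> 'a gamU) set \<times> ('a gamU \<times> 'a gamU) set
                      \<Rightarrow> ('a gamU \<times> 'a gamU) set \<times> ('a gamU \<times> 'a gamU) set" where
  "mirror H = (map_oplane xi (snd H), map_oplane xi (fst H))"

end

theory Submission
  imports Defs
begin

lemma glin:
  assumes "bilinear g"
  shows "g (x+y) z = g x z + g y z" "g x (y+z) = g x y + g x z"
    "g (r *\<^sub>R x) z = r * g x z" "g x (r *\<^sub>R y) = r * g x y"
    "g 0 z = 0" "g x 0 = 0" "g (x - y) z = g x z - g y z" "g x (y - z) = g x y - g x z"
    "g (- x) z = - g x z" "g x (- y) = - g x y"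
  using bilinear_ladd[OF assms] bilinear_radd[OF assms] bilinear_lmul[OF assms] bilinear_rmul[OF assms]
    bilinear_lzero[OF assms] bilinear_rzero[OF assms]
    bilinear_lsub[OF assms] bilinear_rsub[OF assms] bilinear_lneg[OF assms] bilinear_rneg[OF assms] by auto

lemma qlin:
  assumes "bilinear g"
  shows "gam_form g (x+y) z = gam_form g x z + gam_form g y z"
    "gam_form g x (y+z) = gam_form g x y + gam_form g x z"
    "gam_form g (r *\<^sub>R x) z = r * gam_form g x z"
    "gam_form g x (r *\<^sub>R y) = r * gam_form g x y"
    "gam_form g 0 z = 0" "gam_form g x 0 = 0"
    "gam_form g (x - y) z = gam_form g x z - gam_form g y z"
    "gam_form g x (y - z) = gam_form g x y - gam_form g x z"
    "gam_form g (- x) z = - gam_form g x z" "gam_form g x (- y) = - gam_form g x y"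
  by (auto simp: gam_form_def glin[OF assms] algebra_simps)

lemma qsym:
  assumes "\<forall>x y. g x y = g y x"
  shows "gam_form g x y = gam_form g y x"
  using assms by (simp add: gam_form_def algebra_simps)

lemma q_vv: "gam_form g u vv = snd (snd u)" if "bilinear g"
  using that by (simp add: gam_form_def vv_def glin)

lemma oplane_sub:
  assumes "a * d - b * c > 0"
  shows "oplane (a *\<^sub>R e1 + b *\<^sub>R e2) (c *\<^sub>R e1 + d *\<^sub>R e2) \<subseteq> oplane e1 e2"
proof
  fix f assume "f \<in> oplane (a *\<^sub>R e1 + b *\<^sub>R e2) (c *\<^sub>R e1 + d *\<^sub>R e2)"
  then obtain a' b' c' d' where f: "fst f = a' *\<^sub>R (a *\<^sub>R e1 + b *\<^sub>R e2) + b' *\<^sub>R (c *\<^sub>R e1 + d *\<^sub>R e2)"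
     "snd f = c' *\<^sub>R (a *\<^sub>R e1 + b *\<^sub>R e2) + d' *\<^sub>R (c *\<^sub>R e1 + d *\<^sub>R e2)" "a' * d' - b' * c' > 0"
    unfolding oplane_def by auto
  have "fst f = (a'*a + b'*c) *\<^sub>R e1 + (a'*b+b'*d) *\<^sub>R e2"
    "snd f = (c'*a + d'*c) *\<^sub>R e1 + (c'*b+d'*d) *\<^sub>R e2"
    using f by (simp_all add: algebra_simps scaleR_add_left)
  moreover have "(a'*a + b'*c) * (c'*b+d'*d) - (a'*b+b'*d) * (c'*a + d'*c) > 0"
  proof -
    have "(a'*a + b'*c) * (c'*b+d'*d) - (a'*b+b'*d) * (c'*a + d'*c) = (a' * d' - b' * c') * (a * d - b * c)"
      by (simp add: algebra_simps)
    thus ?thesis using f(3) assms by simp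
  qed
  ultimately show "f \<in> oplane e1 e2" unfolding oplane_def
    by (cases f) (auto intro!: exI)
qed

lemma oplane_eq:
  assumes "a * d - b * c > 0"
  shows "oplane (a *\<^sub>R e1 + b *\<^sub>R e2) (c *\<^sub>R e1 + d *\<^sub>R e2) = oplane e1 e2"
proof
  show "oplane (a *\<^sub>R e1 + b *\<^sub>R e2) (c *\<^sub>R e1 + d *\<^sub>R e2) \<subseteq> oplane e1 e2"
    by (rule oplane_sub[OF assms])
next
  define D where "D = a * d - b * c"
  define f1 where "f1 = a *\<^sub>R e1 + b *\<^sub>R e2"
  define f2 where "f2 = c *\<^sub>R e1 + d *\<^sub>R e2"
  have D: "D > 0" using assms D_def by simp
  have "e1 = (d/D) *\<^sub>R f1 + (-b/D) *\<^sub>R f2"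
  proof -
    have "(d/D) *\<^sub>R f1 + (-b/D) *\<^sub>R f2 = (1/D) *\<^sub>R ((d*a - b*c) *\<^sub>R e1 + (d*b - b*d) *\<^sub>R e2)"
      by (simp add: f1_def f2_def algebra_simps scaleR_add_left scaleR_diff_left)
    also have "\<dots> = e1" using D by (simp add: D_def mult.commute)
    finally show ?thesis by simp
  qed
  moreover have "e2 = (-c/D) *\<^sub>R f1 + (a/D) *\<^sub>R f2"
  proof -
    have "(-c/D) *\<^sub>R f1 + (a/D) *\<^sub>R f2 = (1/D) *\<^sub>R ((a*c - c*a) *\<^sub>R e1 + (a*d - c*b) *\<^sub>R e2)"
      by (simp add: f1_def f2_def algebra_simps scaleR_add_left scaleR_diff_left)
    also have "\<dots> = e2" using D by (simp add: D_def mult.commute)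
    finally show ?thesis by simp
  qed
  moreover have "(d/D) * (a/D) - (-b/D) * (-c/D) > 0"
  proof -
    have "(d/D) * (a/D) - (-b/D) * (-c/D) = (a*d-b*c)/(D*D)"
      using D by (simp add: field_simps)
    also have "\<dots> = 1 / D" using D by (simp add: D_def[symmetric])
    finally have "(d/D) * (a/D) - (-b/D) * (-c/D) = 1 / D" .
    thus ?thesis using D by simp
  qed
  ultimately have "oplane e1 e2 \<subseteq> oplane f1 f2"
    by (metis oplane_sub)
  thus "oplane e1 e2 \<subseteq> oplane (a *\<^sub>R e1 + b *\<^sub>R e2) (c *\<^sub>R e1 + d *\<^sub>R e2)"
    by (simp add: f1_def f2_def)
qed

lemma oplane_scale:
  assumes "k \<noteq> 0"
  shows "oplane (k *\<^sub>R e1) (k *\<^sub>R e2) = oplane e1 e2"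
proof -
  have "k * k > 0" using assms by (auto simp: zero_less_mult_iff linorder_neq_iff)
  thus ?thesis using oplane_eq[of k k 0 0 e1 e2] by simp
qed

lemma map_oplane_lin:
  fixes f :: "'v::real_vector \<Rightarrow> 'w::real_vector"
  assumes "\<And>(a::real) (b::real) x y. f (a *\<^sub>R x + b *\<^sub>R y) = a *\<^sub>R f x + b *\<^sub>R f y"
  shows "map_oplane f (oplane e1 e2) = oplane (f e1) (f e2)"
proof (rule set_eqI, rule iffI)
  fix p assume "p \<in> map_oplane f (oplane e1 e2)"
  then obtain a b c d :: real where "p = (f (a *\<^sub>R e1 + b *\<^sub>R e2), f (c *\<^sub>R e1 + d *\<^sub>R e2))" "a*d-b*c>0"
    unfolding map_oplane_def oplane_def by auto
  then show "p \<in> oplane (f e1) (f e2)" unfolding oplane_def by (auto simp: assms)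
next
  fix p assume "p \<in> oplane (f e1) (f e2)"
  then obtain a b c d :: real where p: "p = (a *\<^sub>R f e1 + b *\<^sub>R f e2, c *\<^sub>R f e1 + d *\<^sub>R f e2)" and det: "a*d-b*c>0"
    unfolding oplane_def by auto
  then have "p = (\<lambda>e. (f (fst e), f (snd e))) (a *\<^sub>R e1 + b *\<^sub>R e2, c *\<^sub>R e1 + d *\<^sub>R e2)" by (simp add: assms)
  moreover have "(a *\<^sub>R e1 + b *\<^sub>R e2, c *\<^sub>R e1 + d *\<^sub>R e2) \<in> oplane e1 e2" using det by (auto simp: oplane_def)
  ultimately show "p \<in> map_oplane f (oplane e1 e2)" unfolding map_oplane_def by blast
qed

lemma span2_ex:
  fixes e1 e2 :: "'v::real_vector"
  assumes "x \<in> span {e1, e2}"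
  shows "\<exists>a b. x = a *\<^sub>R e1 + b *\<^sub>R e2"
proof -
  obtain k where "x - k *\<^sub>R e1 \<in> span {e2}" using assms by (auto simp: span_insert)
  then obtain j where "x - k *\<^sub>R e1 = j *\<^sub>R e2" by (auto simp: span_singleton)
  hence "x = k *\<^sub>R e1 + j *\<^sub>R e2" by (simp add: algebra_simps)
  thus ?thesis by blast
qed

lemma gam_form_triple: "gam_form g (x, s, t) (x', s', t') = g x x' + s * t' + t * s'"
  by (simp add: gam_form_def)

lemma pos_oplane_orth:
  fixes g :: "'a::real_vector \<Rightarrow> 'a \<Rightarrow> real"
  assumes bil: "bilinear g" and sym: "\<forall>x y. g x y = g y x"
    and N: "gam_form g e1 e1 > 0" and N2: "gam_form g e2 e2 = gam_form g e1 e1"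
    and O: "gam_form g e1 e2 = 0"
  shows "pos_oplane (gam_form g) (oplane e1 e2)"
proof -
  let ?q = "gam_form g"
  have O': "?q e2 e1 = 0" using O qsym[OF sym] by metis
  have quad: "?q (a *\<^sub>R e1 + b *\<^sub>R e2) (a *\<^sub>R e1 + b *\<^sub>R e2) = (a*a + b*b) * ?q e1 e1" for a b
    using N2 O O' by (simp add: qlin[OF bil] algebra_simps)
  have pos: "(a*a + b*b) * ?q e1 e1 > 0" if "a \<noteq> 0 \<or> b \<noteq> 0" for a b
  proof -
    have "a*a + b*b > 0" using that by (simp add: sum_squares_gt_zero_iff)
    thus ?thesis using N by simp
  qed
  show ?thesis unfolding pos_oplane_def
  proof (rule exI[of _ e1], rule exI[of _ e2], intro conjI)
    show "\<forall>a b. a *\<^sub>R e1 + b *\<^sub>R e2 = 0 \<longrightarrow> a = 0 \<and> b = 0"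
    proof (intro allI impI)
      fix a b assume "a *\<^sub>R e1 + b *\<^sub>R e2 = 0"
      hence "?q (a *\<^sub>R e1 + b *\<^sub>R e2) (a *\<^sub>R e1 + b *\<^sub>R e2) = 0" by (simp add: qlin[OF bil])
      thus "a = 0 \<and> b = 0" using quad pos by (metis less_irrefl)
    qed
    show "\<forall>x\<in>span {e1, e2}. x \<noteq> 0 \<longrightarrow> 0 < ?q x x"
    proof (intro ballI impI)
      fix x assume "x \<in> span {e1, e2}" "x \<noteq> 0"
      then obtain a b where x: "x = a *\<^sub>R e1 + b *\<^sub>R e2" using span2_ex by blast
      with \<open>x \<noteq> 0\<close> have "a \<noteq> 0 \<or> b \<noteq> 0" by auto
      thus "?q x x > 0" using quad pos x by simp
    qed
  qed simp
qed

lemma perp_oplane_orth: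
  assumes bil: "bilinear g" and "gam_form g x e1 = 0" "gam_form g x e2 = 0"
  shows "perp_oplane (gam_form g) x (oplane e1 e2)"
  using assms unfolding perp_oplane_def oplane_def by (auto simp: qlin[OF bil])

lemma in_oplane_self: "(e1, e2) \<in> oplane e1 e2"
proof -
  have "e1 = 1 *\<^sub>R e1 + 0 *\<^sub>R e2 \<and> e2 = 0 *\<^sub>R e1 + 1 *\<^sub>R e2 \<and> (0::real) < 1*1 - 0*0" by simp
  thus ?thesis unfolding oplane_def by blast
qed

lemma xi_lin: "xi (a *\<^sub>R x + b *\<^sub>R y) = a *\<^sub>R xi x + b *\<^sub>R xi y"
  by (simp add: xi_def prod_eq_iff)

lemma F_lin:
  assumes bil: "bilinear g"
  shows "(\<lambda>x. incl x - gam_form g x B *\<^sub>R ww) (a *\<^sub>R x + b *\<^sub>R y)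
     = a *\<^sub>R (\<lambda>x. incl x - gam_form g x B *\<^sub>R ww) x + b *\<^sub>R (\<lambda>x. incl x - gam_form g x B *\<^sub>R ww) y"
  by (simp add: incl_def ww_def qlin[OF bil] algebra_simps)

lemma forall_part:
  fixes g :: "'a::euclidean_space \<Rightarrow> 'a \<Rightarrow> real"
    and P :: "('a gam \<times> 'a gam) set" and \<omega> B :: "'a gam" and \<sigma> :: "'a gam \<times> 'a gam"
  assumes bil: "bilinear g" and sym: "\<forall>x y. g x y = g y x"
    and Gr: "(P, \<omega>) \<in> Gr21 (gam_form g)"
    and o3: "snd (snd \<omega>) = 0" and B3: "snd (snd B) = 0"
    and po: "period_ok (gam_form g) \<sigma>" and Ps: "P = P_sigma \<sigma>"
    and I3: "gam_form g (snd \<sigma>) vv = 0" and cnz: "gam_form g (fst \<sigma>) vv \<noteq> 0"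
  shows "(let c = gam_form g (fst \<sigma>) vv;
                Bw = (B, \<omega>);
                \<sigma>v = cscale (complex_of_real (1 / c))
                       (cpr Bw - cscale (cform (gam_form g) Bw Bw / 2) (creal vv) + creal vs);
                Bwv = cscale (complex_of_real (1 / c))
                       (cpr \<sigma> - cscale (cform (gam_form g) \<sigma> (creal B)) (creal vv));
                Bv = fst Bwv; \<omega>v = snd Bwv
            in (P_sigma \<sigma>v, \<omega>v) \<in> Gr21 (gam_form g)
               \<and> mirror (gamma g ((P, \<omega>), B)) = gamma g ((P_sigma \<sigma>v, \<omega>v), Bv)
               \<and> mirror (gamma g ((P, \<omega>), B)) \<in> gamma g ` (Gr21 (gam_form g) \<times> UNIV))"
proof -
  let ?q = "gam_form g"
  note gl = glin[OF bil]
  define xR where "xR = fst (fst \<sigma>)"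
  define sR where "sR = fst (snd (fst \<sigma>))"
  define c where "c = snd (snd (fst \<sigma>))"
  define xI where "xI = fst (snd \<sigma>)"
  define sI where "sI = fst (snd (snd \<sigma>))"
  define b where "b = fst B"
  define sB where "sB = fst (snd B)"
  define ox where "ox = fst \<omega>"
  define so where "so = fst (snd \<omega>)"
  have tI: "snd (snd (snd \<sigma>)) = 0" using I3 q_vv[OF bil] by simp
  have sig: "\<sigma> = ((xR, sR, c), (xI, sI, 0))"
    using tI by (simp add: xR_def sR_def c_def xI_def sI_def prod_eq_iff)
  have Beq: "B = (b, sB, 0)" using B3 by (simp add: b_def sB_def prod_eq_iff)
  have oeq: "\<omega> = (ox, so, 0)" using o3 by (simp add: ox_def so_def prod_eq_iff)
  have c0: "c \<noteq> 0" using cnz q_vv[OF bil] by (simp add: c_def)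
  have cf: "cform ?q \<sigma> \<sigma> = 0" and p2: "?q (2 *\<^sub>R fst \<sigma>) (2 *\<^sub>R fst \<sigma>) > 0"
    using po by (auto simp: period_ok_def)
  have e1: "g xR xR + 2 * sR * c = g xI xI" and e2: "g xR xI + c * sI = 0"
    using cf by (simp_all add: sig cform_def gam_form_triple complex_eq_iff sym algebra_simps)
  have xIpos: "g xI xI > 0" using p2 e1 by (simp add: sig gam_form_triple gl algebra_simps)
  have perp: "perp_oplane ?q \<omega> P" using Gr by (simp add: Gr21_def)
  have oR: "g ox xR + so * c = 0" and oI: "g ox xI = 0"
    using perp in_oplane_self[of "fst \<sigma>" "snd \<sigma>"]
    unfolding perp_oplane_def Ps P_sigma_def by (auto simp: sig oeq gam_form_triple)
  define Rv where "Rv = (1/c) *\<^sub>R (b, (g ox ox - g b b)/2, 1::real)"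
  define Iv where "Iv = (1/c) *\<^sub>R (ox, - g b ox, 0::real)"
  define Bv where "Bv = (1/c) *\<^sub>R (xR, - (g xR b + c * sB), 0::real)"
  define wv where "wv = (1/c) *\<^sub>R (xI, - g xI b, 0::real)"
  have sv: "cscale (complex_of_real (1 / ?q (fst \<sigma>) vv))
                       (cpr (B, \<omega>) - cscale (cform ?q (B, \<omega>) (B, \<omega>) / 2) (creal vv) + creal vs) = (Rv, Iv)"
    using c0 by (simp add: Rv_def Iv_def sig Beq oeq cscale_def cpr_def pr_def creal_def cform_def
       gam_form_triple vv_def vs_def sym q_vv[OF bil] gl field_simps)
  have bw: "cscale (complex_of_real (1 / ?q (fst \<sigma>) vv))
                       (cpr \<sigma> - cscale (cform ?q \<sigma> (creal B)) (creal vv)) = (Bv, wv)"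
    using c0 by (simp add: Bv_def wv_def sig Beq oeq cscale_def cpr_def pr_def creal_def cform_def
       gam_form_triple vv_def vs_def sym q_vv[OF bil] gl qlin[OF bil] field_simps)
  have oo: "g ox ox > 0" using Gr by (simp add: Gr21_def oeq gam_form_triple)
  have c2: "c * c > 0" using c0 by (auto simp: zero_less_mult_iff linorder_neq_iff)
  have RR: "?q Rv Rv = g ox ox / (c*c)" using c0
    by (simp add: Rv_def gam_form_triple gl field_simps)
  have II: "?q Iv Iv = g ox ox / (c*c)" using c0
    by (simp add: Iv_def gam_form_triple gl field_simps)
  have RI: "?q Rv Iv = 0" using c0
    by (simp add: Rv_def Iv_def gam_form_triple gl field_simps)
  have WR: "?q wv Rv = 0" using c0
    by (simp add: Rv_def wv_def gam_form_triple gl field_simps)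
  have WI: "?q wv Iv = 0" using c0 oI sym
    by (simp add: Iv_def wv_def gam_form_triple gl field_simps)
  have WW: "?q wv wv = g xI xI / (c*c)" using c0
    by (simp add: wv_def gam_form_triple gl field_simps)
  have G: "(P_sigma (Rv, Iv), wv) \<in> Gr21 ?q"
    unfolding Gr21_def P_sigma_def
    using pos_oplane_orth[OF bil sym, of Rv Iv] perp_oplane_orth[OF bil WR WI] RR II RI WW oo xIpos c2
    by simp
  define F where "F = (\<lambda>x. incl x - ?q x B *\<^sub>R ww)"
  define F' where "F' = (\<lambda>x. incl x - ?q x Bv *\<^sub>R ww)"
  define h1 where "h1 = (1/2 * (?q \<omega> \<omega> - ?q B B)) *\<^sub>R ww + ws + incl B"
  define h2 where "h2 = incl \<omega> - ?q \<omega> B *\<^sub>R ww"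
  define h1' where "h1' = (1/2 * (?q wv wv - ?q Bv Bv)) *\<^sub>R ww + ws + incl Bv"
  define h2' where "h2' = incl wv - ?q wv Bv *\<^sub>R ww"
  have gam1: "gamma g ((P, \<omega>), B) = (map_oplane F P, oplane h1 h2)"
    by (simp add: gamma_def F_def h1_def h2_def Let_def)
  have gam2: "gamma g ((P_sigma (Rv, Iv), wv), Bv) = (map_oplane F' (oplane Rv Iv), oplane h1' h2')"
    by (simp add: gamma_def F'_def h1'_def h2'_def P_sigma_def Let_def)
  have x1: "xi h1 = c *\<^sub>R F' Rv" using c0 sym
    by (simp add: h1_def F'_def Rv_def Bv_def Beq oeq xi_def incl_def ww_def ws_def gam_form_triple gl field_simps)
  have x2: "xi h2 = c *\<^sub>R F' Iv" using c0 oR sym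
    by (simp add: h2_def F'_def Iv_def Bv_def Beq oeq xi_def incl_def ww_def ws_def gam_form_triple gl field_simps)
  have x3: "xi (F (fst \<sigma>)) = c *\<^sub>R h1'" using c0 e1[symmetric]
    by (simp add: h1'_def F_def wv_def Bv_def Beq sig xi_def incl_def ww_def ws_def gam_form_triple gl field_simps)
  have x4: "xi (F (snd \<sigma>)) = c *\<^sub>R h2'" using c0 e2 sym
    by (simp add: h2'_def F_def wv_def Bv_def Beq sig xi_def incl_def ww_def ws_def gam_form_triple gl field_simps)
  have Fl: "F (a *\<^sub>R x + b *\<^sub>R y) = a *\<^sub>R F x + b *\<^sub>R F y" for a b x y
    by (simp add: F_def incl_def ww_def qlin[OF bil] algebra_simps)
  have F'l: "F' (a *\<^sub>R x + b *\<^sub>R y) = a *\<^sub>R F' x + b *\<^sub>R F' y" for a b x y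
    by (simp add: F'_def incl_def ww_def qlin[OF bil] algebra_simps)
  have M1: "map_oplane xi (oplane h1 h2) = map_oplane F' (oplane Rv Iv)"
  proof -
    have "map_oplane xi (oplane h1 h2) = oplane (xi h1) (xi h2)" by (rule map_oplane_lin[OF xi_lin])
    also have "\<dots> = oplane (c *\<^sub>R F' Rv) (c *\<^sub>R F' Iv)" using x1 x2 by simp
    also have "\<dots> = oplane (F' Rv) (F' Iv)" by (rule oplane_scale[OF c0])
    also have "\<dots> = map_oplane F' (oplane Rv Iv)" by (rule map_oplane_lin[OF F'l, symmetric])
    finally show ?thesis .
  qed
  have M2: "map_oplane xi (map_oplane F P) = oplane h1' h2'"
  proof -
    have "map_oplane xi (map_oplane F P) = map_oplane xi (oplane (F (fst \<sigma>)) (F (snd \<sigma>)))"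
      by (simp add: Ps P_sigma_def map_oplane_lin[OF Fl])
    also have "\<dots> = oplane (xi (F (fst \<sigma>))) (xi (F (snd \<sigma>)))" by (rule map_oplane_lin[OF xi_lin])
    also have "\<dots> = oplane (c *\<^sub>R h1') (c *\<^sub>R h2')" using x3 x4 by simp
    also have "\<dots> = oplane h1' h2'" by (rule oplane_scale[OF c0])
    finally show ?thesis .
  qed
  have M: "mirror (gamma g ((P, \<omega>), B)) = gamma g ((P_sigma (Rv, Iv), wv), Bv)"
    unfolding gam1 gam2 mirror_def using M1 M2 by simp
  show ?thesis
    unfolding Let_def sv bw fst_conv snd_conv
    using G M by (auto intro!: image_eqI[where x="((P_sigma (Rv, Iv), wv), Bv)"])
qed

lemma orth_span:
  assumes bil: "bilinear g" and "\<forall>s\<in>S. gam_form g x s = 0" and "y \<in> span S"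
  shows "gam_form g x y = 0"
proof -
  have "span S \<subseteq> {y. gam_form g x y = 0}"
    by (rule span_minimal) (use assms(2) in \<open>auto simp: subspace_def qlin[OF bil]\<close>)
  thus ?thesis using assms(3) by blast
qed

lemma not_in_span_orth:
  assumes bil: "bilinear g" and "\<forall>s\<in>S. gam_form g x s = 0" and "gam_form g x x \<noteq> 0"
  shows "x \<notin> span S"
  using orth_span[OF bil assms(2)] assms(3) by blast

lemma exist_part:
  fixes g :: "'a::euclidean_space \<Rightarrow> 'a \<Rightarrow> real"
    and P :: "('a gam \<times> 'a gam) set" and \<omega> :: "'a gam"
  assumes bil: "bilinear g" and sym: "\<forall>x y. g x y = g y x"
    and sg: "has_signature (gam_form g) 3 m"
    and Gr: "(P, \<omega>) \<in> Gr21 (gam_form g)"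
    and o3: "snd (snd \<omega>) = 0"
  shows "\<exists>\<sigma>. period_ok (gam_form g) \<sigma> \<and> P = P_sigma \<sigma> \<and>
              gam_form g (snd \<sigma>) vv = 0 \<and> gam_form g (fst \<sigma>) vv \<noteq> 0"
proof -
  let ?q = "gam_form g"
  note ql = qlin[OF bil]
  note qs = qsym[OF sym]
  obtain e1 e2 where ind: "\<forall>a b. a *\<^sub>R e1 + b *\<^sub>R e2 = 0 \<longrightarrow> a = 0 \<and> b = 0"
    and Pe: "P = oplane e1 e2" and posS: "\<forall>x\<in>span {e1, e2}. x \<noteq> 0 \<longrightarrow> ?q x x > 0"
    using Gr unfolding Gr21_def pos_oplane_def by auto
  have perp: "perp_oplane ?q \<omega> P" and ww: "?q \<omega> \<omega> > 0" using Gr by (auto simp: Gr21_def)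
  have w1: "?q \<omega> e1 = 0" and w2: "?q \<omega> e2 = 0"
    using perp in_oplane_self[of e1 e2] unfolding perp_oplane_def Pe by auto
  have posq: "?q (a *\<^sub>R e1 + b *\<^sub>R e2) (a *\<^sub>R e1 + b *\<^sub>R e2) > 0" if "a \<noteq> 0 \<or> b \<noteq> 0" for a b
  proof -
    have "a *\<^sub>R e1 + b *\<^sub>R e2 \<noteq> 0" using ind that by blast
    moreover have "a *\<^sub>R e1 + b *\<^sub>R e2 \<in> span {e1, e2}"
      by (intro span_add span_scale span_base) auto
    ultimately show ?thesis using posS by blast
  qed
  define G11 where "G11 = ?q e1 e1"
  define G12 where "G12 = ?q e1 e2"
  define G22 where "G22 = ?q e2 e2"
  have quad: "?q (a *\<^sub>R e1 + b *\<^sub>R e2) (a *\<^sub>R e1 + b *\<^sub>R e2) = a*a*G11 + 2*a*b*G12 + b*b*G22" for a b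
    using qs[of e2 e1] by (simp add: ql G11_def G12_def G22_def algebra_simps)
  have G11: "G11 > 0" using posq[of 1 0] quad[of 1 0] by simp
  have G22: "G22 > 0" using posq[of 0 1] quad[of 0 1] by simp
  define D where "D = G11 * G22 - G12 * G12"
  have D: "D > 0"
  proof -
    have h: "G22 * D = ?q (G22 *\<^sub>R e1 + (-G12) *\<^sub>R e2) (G22 *\<^sub>R e1 + (-G12) *\<^sub>R e2)"
      unfolding quad by (simp add: D_def algebra_simps)
    have "G22 * D > 0" unfolding h using posq[of G22 "-G12"] G22 by simp
    thus ?thesis using G22 by (simp add: zero_less_mult_iff)
  qed
  define a where "a = ?q e1 vv"
  define b where "b = ?q e2 vv"
  have ab: "a \<noteq> 0 \<or> b \<noteq> 0"
  proof (rule ccontr)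
    assume "\<not> (a \<noteq> 0 \<or> b \<noteq> 0)"
    hence a0: "a = 0" and b0: "b = 0" by auto
    have nd: "\<forall>x. (\<forall>y. ?q x y = 0) \<longrightarrow> x = 0" and le3: "\<forall>V. pos_def_sub ?q V \<longrightarrow> dim V \<le> 3"
      using sg unfolding has_signature_def by auto
    have "vv \<noteq> (0::'a gam)" by (simp add: vv_def zero_prod_def)
    then obtain y where y: "?q vv y \<noteq> 0" using nd by blast
    define r1 where "r1 = ?q y e1"
    define r2 where "r2 = ?q y e2"
    define al where "al = (r1 * G22 - r2 * G12) / D"
    define be where "be = (r2 * G11 - r1 * G12) / D"
    define ga where "ga = ?q y \<omega> / ?q \<omega> \<omega>"
    define y' where "y' = y - al *\<^sub>R e1 - be *\<^sub>R e2 - ga *\<^sub>R \<omega>"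
    have e21: "?q e2 e1 = G12" using qs G12_def by metis
    have we1: "?q e1 \<omega> = 0" "?q e2 \<omega> = 0" using w1 w2 qs by metis+
    have y1: "?q y' e1 = 0"
    proof -
      have "?q y' e1 = r1 - al * G11 - be * G12"
        using w1 e21 by (simp add: y'_def ql r1_def G11_def)
      also have "\<dots> = 0" using D by (simp add: al_def be_def D_def field_simps)
      finally show ?thesis .
    qed
    have y2: "?q y' e2 = 0"
    proof -
      have "?q y' e2 = r2 - al * G12 - be * G22"
        using w2 by (simp add: y'_def ql r2_def G12_def G22_def)
      also have "\<dots> = 0" using D by (simp add: al_def be_def D_def field_simps)
      finally show ?thesis .
    qed
    have y3: "?q y' \<omega> = 0"
      using we1 ww by (simp add: y'_def ql ga_def)
    have vq: "?q vv e1 = 0" "?q vv e2 = 0" "?q vv \<omega> = 0" "?q vv vv = 0"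
      using a0 b0 qs o3 q_vv[OF bil] by (auto simp: a_def b_def vv_def gam_form_triple)
    define k where "k = ?q vv y'"
    have k: "k \<noteq> 0" using y vq by (simp add: k_def y'_def ql)
    define mm where "mm = ?q y' y'"
    define t where "t = \<bar>mm\<bar> + 1"
    have t: "t > 0" by (simp add: t_def)
    define ep where "ep = k / t"
    define z where "z = vv + ep *\<^sub>R y'"
    have zz: "?q z z > 0"
    proof -
      have y'v: "?q y' vv = k" using qs k_def by metis
      have "?q z z = 2 * ep * k + ep * ep * mm"
        using vq y'v by (simp add: z_def ql mm_def k_def algebra_simps)
      also have "\<dots> = k * k * (2 * t + mm) / (t * t)"
        using t by (simp add: ep_def field_simps)
      also have "\<dots> > 0"
      proof -
        have "2 * t + mm > 0" by (simp add: t_def)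
        moreover have "k * k > 0" using k by (auto simp: zero_less_mult_iff linorder_neq_iff)
        ultimately show ?thesis using t by simp
      qed
      finally show ?thesis .
    qed
    have z1: "?q z e1 = 0" "?q z e2 = 0" "?q z \<omega> = 0"
      using vq y1 y2 y3 by (simp_all add: z_def ql)
    have z1': "?q e1 z = 0" "?q e2 z = 0" "?q \<omega> z = 0" using z1 qs by metis+
    define V where "V = span {z, \<omega>, e2, e1}"
    have pdV: "pos_def_sub ?q V"
      unfolding pos_def_sub_def
    proof (intro conjI ballI impI)
      show "subspace V" by (simp add: V_def subspace_span)
    next
      fix x assume xV: "x \<in> V" and x0: "x \<noteq> 0"
      obtain k1 where "x - k1 *\<^sub>R z \<in> span {\<omega>, e2, e1}" using xV by (auto simp: V_def span_insert)
      then obtain k2 where "x - k1 *\<^sub>R z - k2 *\<^sub>R \<omega> \<in> span {e2, e1}" by (auto simp: span_insert)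
      hence "x - k1 *\<^sub>R z - k2 *\<^sub>R \<omega> \<in> span {e1, e2}" by (simp add: insert_commute)
      then obtain c1 c2 where "x - k1 *\<^sub>R z - k2 *\<^sub>R \<omega> = c1 *\<^sub>R e1 + c2 *\<^sub>R e2" using span2_ex by blast
      hence xe: "x = (c1 *\<^sub>R e1 + c2 *\<^sub>R e2) + (k2 *\<^sub>R \<omega> + k1 *\<^sub>R z)" by (simp add: algebra_simps)
      let ?p = "c1 *\<^sub>R e1 + c2 *\<^sub>R e2"
      have pz: "?q ?p z = 0" "?q ?p \<omega> = 0" "?q z ?p = 0" "?q \<omega> ?p = 0"
        using z1 z1' w1 w2 we1 by (simp_all add: ql)
      have "?q x x = ?q ?p ?p + k2 * k2 * ?q \<omega> \<omega> + k1 * k1 * ?q z z"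
        using pz z1 z1' w1 w2 we1 unfolding xe by (simp add: ql algebra_simps)
      moreover have "?q ?p ?p \<ge> 0" using posq[of c1 c2] by (cases "c1 = 0 \<and> c2 = 0") (auto simp: ql)
      moreover have "k2 * k2 * ?q \<omega> \<omega> \<ge> 0" "k1 * k1 * ?q z z \<ge> 0" using ww zz by simp_all
      moreover have "?q ?p ?p > 0 \<or> k2 * k2 * ?q \<omega> \<omega> > 0 \<or> k1 * k1 * ?q z z > 0"
      proof -
        have "c1 \<noteq> 0 \<or> c2 \<noteq> 0 \<or> k2 \<noteq> 0 \<or> k1 \<noteq> 0" using x0 xe by auto
        thus ?thesis using posq[of c1 c2] ww zz by (auto simp: zero_less_mult_iff linorder_neq_iff)
      qed
      ultimately show "?q x x > 0" by linarith
    qed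
    have "dim V = 4"
    proof -
      have "e1 \<noteq> 0" using ind by (metis add_0 scale_zero_left scale_one zero_neq_one)
      have "e2 \<notin> span {e1}"
      proof
        assume "e2 \<in> span {e1}"
        then obtain kk where "e2 = kk *\<^sub>R e1" by (auto simp: span_singleton)
        hence "kk *\<^sub>R e1 + (-1) *\<^sub>R e2 = 0" by simp
        thus False using ind[rule_format, of kk "-1"] by simp
      qed
      moreover have "\<omega> \<notin> span {e2, e1}"
        by (rule not_in_span_orth[OF bil]) (use w1 w2 ww in auto)
      moreover have "z \<notin> span {\<omega>, e2, e1}"
        by (rule not_in_span_orth[OF bil]) (use z1 zz in auto)
      ultimately show ?thesis using \<open>e1 \<noteq> 0\<close> by (simp add: V_def dim_insert)
    qed
    thus False using le3 pdV by auto
  qed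
  have e21: "?q e2 e1 = G12" using qs G12_def by metis
  define a0 where "a0 = (a * G22 - b * G12) / D"
  define b0 where "b0 = (b * G11 - a * G12) / D"
  define R0 where "R0 = a0 *\<^sub>R e1 + b0 *\<^sub>R e2"
  have R1: "?q R0 e1 = a"
  proof -
    have "?q R0 e1 = a0 * G11 + b0 * G12" using e21 by (simp add: R0_def ql G11_def)
    also have "\<dots> = ((a * G22 - b * G12) * G11 + (b * G11 - a * G12) * G12) / D"
      using D by (simp add: a0_def b0_def field_simps)
    also have "\<dots> = a * D / D" by (simp add: D_def algebra_simps)
    also have "\<dots> = a" using D by simp
    finally show ?thesis .
  qed
  have R2: "?q R0 e2 = b"
  proof -
    have "?q R0 e2 = a0 * G12 + b0 * G22" by (simp add: R0_def ql G12_def G22_def)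
    also have "\<dots> = ((a * G22 - b * G12) * G12 + (b * G11 - a * G12) * G22) / D"
      using D by (simp add: a0_def b0_def field_simps)
    also have "\<dots> = b * D / D" by (simp add: D_def algebra_simps)
    also have "\<dots> = b" using D by simp
    finally show ?thesis .
  qed
  define NR where "NR = ?q R0 R0"
  have NRe: "NR = a0 * a + b0 * b" using R1 R2 by (simp add: NR_def R0_def ql)
  have ab0: "a0 \<noteq> 0 \<or> b0 \<noteq> 0"
  proof (rule ccontr)
    assume "\<not> (a0 \<noteq> 0 \<or> b0 \<noteq> 0)"
    hence "R0 = 0" by (simp add: R0_def)
    thus False using R1 R2 ab by (simp add: ql)
  qed
  have NR: "NR > 0" using posq[OF ab0] by (simp add: NR_def R0_def)
  define I0 where "I0 = b *\<^sub>R e1 + (- a) *\<^sub>R e2"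
  define NI where "NI = ?q I0 I0"
  have NI: "NI > 0" using posq[of b "-a"] ab by (auto simp: NI_def I0_def)
  have RI: "?q R0 I0 = 0" using R1 R2 by (simp add: I0_def ql)
  have IR: "?q I0 R0 = 0" using RI qs by metis
  define lam where "lam = - sqrt (NR / NI)"
  have lam2: "lam * lam = NR / NI" using NR NI by (simp add: lam_def)
  have lamneg: "lam < 0" using NR NI by (simp add: lam_def)
  define Im where "Im = lam *\<^sub>R I0"
  have II: "?q Im Im = NR" using lam2 NI by (simp add: Im_def ql NI_def[symmetric] mult.assoc[symmetric])
  have RIm: "?q R0 Im = 0" "?q Im R0 = 0" using RI IR by (simp_all add: Im_def ql)
  have vR: "?q R0 vv = NR" using NRe by (simp add: R0_def ql a_def b_def)
  have vI: "?q Im vv = 0" by (simp add: Im_def I0_def ql a_def b_def)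
  have Pe2: "P = oplane R0 Im"
  proof -
    have "Im = (lam * b) *\<^sub>R e1 + (- lam * a) *\<^sub>R e2" by (simp add: Im_def I0_def algebra_simps)
    moreover have "a0 * (- lam * a) - b0 * (lam * b) > 0"
    proof -
      have "a0 * (- lam * a) - b0 * (lam * b) = (- lam) * NR" using NRe by (simp add: algebra_simps)
      thus ?thesis using lamneg NR by (simp add: mult_neg_pos)
    qed
    ultimately show ?thesis using oplane_eq Pe by (metis R0_def)
  qed
  show ?thesis
  proof (intro exI[of _ "(R0, Im)"] conjI)
    show "period_ok ?q (R0, Im)"
      using II RIm NR by (simp add: period_ok_def cform_def ql NR_def complex_eq_iff)
    show "P = P_sigma (R0, Im)" using Pe2 by (simp add: P_sigma_def)
    show "?q (snd (R0, Im)) vv = 0" using vI by simp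
    show "?q (fst (R0, Im)) vv \<noteq> 0" using vR NR by simp
  qed
qed

theorem mainTheorem14:
  fixes g :: "'a::euclidean_space \<Rightarrow> 'a \<Rightarrow> real"
    and P :: "('a gam \<times> 'a gam) set" and \<omega> B :: "'a gam"
  assumes "bilinear g" and "\<forall>x y. g x y = g y x"
    and "has_signature (gam_form g) 3 (DIM('a gam) - 3)"
    and "(P, \<omega>) \<in> Gr21 (gam_form g)"
    and "snd (snd \<omega>) = 0" and "snd (snd B) = 0"
  shows "(\<exists>\<sigma>. period_ok (gam_form g) \<sigma> \<and> P = P_sigma \<sigma> \<and>
              gam_form g (snd \<sigma>) vv = 0 \<and> gam_form g (fst \<sigma>) vv \<noteq> 0)
       \<and> (\<forall>\<sigma>. period_ok (gam_form g) \<sigma> \<and> P = P_sigma \<sigma> \<and>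
              gam_form g (snd \<sigma>) vv = 0 \<and> gam_form g (fst \<sigma>) vv \<noteq> 0 \<longrightarrow>
           (let c = gam_form g (fst \<sigma>) vv;
                Bw = (B, \<omega>);
                \<sigma>v = cscale (complex_of_real (1 / c))
                       (cpr Bw - cscale (cform (gam_form g) Bw Bw / 2) (creal vv) + creal vs);
                Bwv = cscale (complex_of_real (1 / c))
                       (cpr \<sigma> - cscale (cform (gam_form g) \<sigma> (creal B)) (creal vv));
                Bv = fst Bwv; \<omega>v = snd Bwv
            in (P_sigma \<sigma>v, \<omega>v) \<in> Gr21 (gam_form g)
               \<and> mirror (gamma g ((P, \<omega>), B)) = gamma g ((P_sigma \<sigma>v, \<omega>v), Bv)
               \<and> mirror (gamma g ((P, \<omega>), B)) \<in> gamma g ` (Gr21 (gam_form g) \<times> UNIV)))"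
  using exist_part[OF assms(1,2,3,4,5)] forall_part[OF assms(1,2,4,5,6)] by blast

end
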